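(* Let $A, B, K, L, F \in \mathbb{R}^{n\times n}$ with $B$ and $L$ non-singular, and suppose $$\sigma_{\min}(KL^{-1})\,\sigma_{\min}(B^{-1}A) > 1.$$ Then the Sylvester-like absolute value equation $$AXK + B\lvert X\rvert L = F$$ has exactly one solution $X \in \mathbb{R}^{n\times n}$.
   Context: $\sigma_{\min}(\cdot)$ is the smallest singular value and $\lvert X\rvert$ the entrywise absolute value of a matrix $X$. *)

theory Defs
  imports "HOL-Analysis.Analysis"
begin

definition mat_abs :: "real^'n^'m \<Rightarrow> real^'n^'m" where
  "mat_abs X = (\<chi> i j. \<bar>X $ i $ j\<bar>)"

definition real_eigenvalues :: "real^'n^'n \<Rightarrow> real set" where
  "real_eigenvalues M = {c. \<exists>v. v \<noteq> 0 \<and> M *v v = c *\<^sub>R v}"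

definition sigma_min :: "real^'n^'n \<Rightarrow> real" where
  "sigma_min M = sqrt (Min (real_eigenvalues (transpose M ** M)))"

end

theory Submission imports Defs begin

lemma minv: fixes A :: "real^'n^'n" assumes "invertible A"
  shows "A ** matrix_inv A = mat 1" "matrix_inv A ** A = mat 1"
  using someI_ex[OF assms[unfolded invertible_def]] unfolding matrix_inv_def by auto

lemma inner_transpose: fixes S :: "real^'n^'m"
  shows "x \<bullet> (transpose S *v y) = (S *v x) \<bullet> y"
  using dot_lmul_matrix[of y S x] by (simp add: inner_commute)

lemma mat_add_rdistrib: fixes A B C :: "real^'n^'n"
  shows "(A + B) ** C = A ** C + B ** C"
  by (simp add: matrix_matrix_mult_def vec_eq_iff sum.distrib algebra_simps)

lemma mat_diff_ldistrib: fixes A B C :: "real^'n^'n"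
  shows "A ** (B - C) = A ** B - A ** C"
  by (simp add: matrix_matrix_mult_def vec_eq_iff sum_subtractf algebra_simps)

lemma mat_diff_rdistrib: fixes A B C :: "real^'n^'n"
  shows "(A - B) ** C = A ** C - B ** C"
  by (simp add: matrix_matrix_mult_def vec_eq_iff sum_subtractf algebra_simps)

lemma row_mult: fixes Z N :: "real^'n^'n"
  shows "(Z ** N) $ i = transpose N *v (Z $ i)"
  by (simp add: matrix_matrix_mult_def matrix_vector_mult_def transpose_def vec_eq_iff mult.commute)

lemma norm_transpose: fixes X :: "real^'n^'n"
  shows "norm (transpose X) = norm X"
proof -
  have "inner (transpose X) (transpose X) = inner X X"
    unfolding inner_vec_def transpose_def by (simp, subst sum.swap, simp)
  thus ?thesis by (simp add: norm_eq_sqrt_inner)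
qed

lemma rows_bound: fixes Z N :: "real^'n^'n"
  assumes "c \<ge> 0" "\<And>y. norm (transpose N *v y) \<ge> c * norm y"
  shows "norm (Z ** N) \<ge> c * norm Z"
proof -
  have "norm (c *\<^sub>R Z) \<le> norm (Z ** N)"
    proof (rule norm_le_componentwise_cart)
    fix i show "norm ((c *\<^sub>R Z) $ i) \<le> norm ((Z ** N) $ i)"
      using assms(2)[of "Z $ i"] assms(1) by (simp add: row_mult del: transpose_matrix_vector)
  qed
  thus ?thesis using assms(1) by simp
qed

lemma cols_bound: fixes Y M :: "real^'n^'n"
  assumes "c \<ge> 0" "\<And>y. norm (M *v y) \<ge> c * norm y"
  shows "norm (M ** Y) \<ge> c * norm Y"
proof -
  have "norm (transpose Y ** transpose M) \<ge> c * norm (transpose Y)"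
    by (rule rows_bound) (simp_all add: assms)
  thus ?thesis by (simp add: matrix_transpose_mul[symmetric] norm_transpose)
qed

lemma abs_lip: fixes X Y :: "real^'n^'m"
  shows "norm (mat_abs X - mat_abs Y) \<le> norm (X - Y)"
  apply (rule norm_le_componentwise_cart)
  apply (rule norm_le_componentwise_cart)
  by (simp add: mat_abs_def)

lemma quad0: fixes a c :: real assumes "\<forall>t. 0 \<le> t*a + t^2*c" shows "a = 0"
proof (rule ccontr)
  assume a: "a \<noteq> 0"
  define d where "d = \<bar>c\<bar> + 1"
  have d: "d > 0" "c - d < 0" unfolding d_def by auto
  define t where "t = - a / d"
  have "t*a + t^2*c = a^2/d^2 * (c - d)" unfolding t_def using d
    by (simp add: field_simps power2_eq_square)
  also have "\<dots> < 0" using a d by (intro mult_pos_neg) auto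
  finally show False using assms not_le by blast
qed

lemma q_scale: fixes S :: "real^'n^'n"
  shows "(c *\<^sub>R x) \<bullet> (S *v (c *\<^sub>R x)) = c^2 * (x \<bullet> (S *v x))"
  by (simp add: matrix_vector_mult_scaleR power2_eq_square)

lemma rayleigh_min:
  fixes S :: "real^'n^'n"
  assumes sym: "transpose S = S"
  shows "\<exists>l\<in>real_eigenvalues S. \<forall>x. l * (x \<bullet> x) \<le> x \<bullet> (S *v x)"
proof -
  define q where "q x = x \<bullet> (S *v x)" for x :: "real^'n"
  have symq: "x \<bullet> (S *v y) = (S *v x) \<bullet> y" for x y
    using inner_transpose[of x S y] sym by simp
  have cont: "continuous_on (sphere (0::real^'n) 1) q"
    unfolding q_def by (intro continuous_intros linear_continuous_on matrix_vector_mul_bounded_linear)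
  obtain u where u: "u \<in> sphere 0 1" "\<And>y. y \<in> sphere 0 1 \<Longrightarrow> q u \<le> q y"
    using continuous_attains_inf[OF compact_sphere _ cont] by auto
  define l where "l = q u"
  have uu: "u \<bullet> u = 1" using u(1) by (simp add: dot_square_norm)
  have bound: "l * (x \<bullet> x) \<le> q x" for x
  proof (cases "x = 0")
    case True thus ?thesis by (simp add: q_def)
  next
    case False
    define y where "y = (1 / norm x) *\<^sub>R x"
    have "y \<in> sphere 0 1" using False by (simp add: y_def)
    hence "l \<le> q y" using u(2) l_def by simp
    also have "q y = q x / (norm x)^2" unfolding q_def y_def q_scale
      by (simp add: power_divide)
    finally have "l * (norm x)^2 \<le> q x" using False by (simp add: field_simps)
    thus ?thesis by (simp add: power2_norm_eq_inner)
  qed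
  define w where "w = S *v u - l *\<^sub>R u"
  have "\<forall>t. 0 \<le> t * (2 * (w \<bullet> w)) + t^2 * (q w - l * (w \<bullet> w))"
  proof
    fix t :: real
    have su: "u \<bullet> (S *v w) = w \<bullet> (S *v u)" using symq[of u w] by (simp add: inner_commute)
    have wu: "w \<bullet> u = u \<bullet> w" by (rule inner_commute)
    have "l * ((u + t *\<^sub>R w) \<bullet> (u + t *\<^sub>R w)) \<le> q (u + t *\<^sub>R w)" by (rule bound)
    moreover have "q (u + t *\<^sub>R w) = q u + 2 * t * (w \<bullet> (S *v u)) + t^2 * q w"
      unfolding q_def by (simp add: inner_add_left inner_add_right matrix_vector_right_distrib
         matrix_vector_mult_scaleR su power2_eq_square algebra_simps)
    moreover have "(u + t *\<^sub>R w) \<bullet> (u + t *\<^sub>R w) = 1 + 2 * t * (u \<bullet> w) + t^2 * (w \<bullet> w)"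
      using uu by (simp add: inner_add_left inner_add_right wu power2_eq_square algebra_simps)
    moreover have "w \<bullet> (S *v u) = w \<bullet> w + l * (u \<bullet> w)"
    proof -
      have "S *v u = w + l *\<^sub>R u" unfolding w_def by simp
      thus ?thesis by (simp add: inner_add_right wu)
    qed
    ultimately have "l * (1 + 2 * t * (u \<bullet> w) + t^2 * (w \<bullet> w)) \<le> l + 2 * t * (w \<bullet> w + l * (u \<bullet> w)) + t^2 * q w"
      unfolding l_def by metis
    thus "0 \<le> t * (2 * (w \<bullet> w)) + t^2 * (q w - l * (w \<bullet> w))"
      by (simp add: ring_distribs mult_ac)
  qed
  hence "2 * (w \<bullet> w) = 0" by (rule quad0)
  hence "w = 0" by simp
  hence "S *v u = l *\<^sub>R u" unfolding w_def by simp
  moreover have "u \<noteq> 0" using u(1) by auto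
  ultimately have "l \<in> real_eigenvalues S" unfolding real_eigenvalues_def by auto
  thus ?thesis using bound unfolding q_def by auto
qed

lemma eig_finite:
  fixes S :: "real^'n^'n" assumes sym: "transpose S = S"
  shows "finite (real_eigenvalues S)"
proof -
  define E where "E = real_eigenvalues S"
  define ev where "ev c = (SOME v. v \<noteq> 0 \<and> S *v v = c *\<^sub>R v)" for c
  have ev: "ev c \<noteq> 0 \<and> S *v ev c = c *\<^sub>R ev c" if "c \<in> E" for c
    using that unfolding E_def real_eigenvalues_def ev_def mem_Collect_eq by (rule someI_ex)
  have symq: "x \<bullet> (S *v y) = (S *v x) \<bullet> y" for x y
    using inner_transpose[of x S y] sym by simp
  have inj: "inj_on ev E"
  proof (rule inj_onI)
    fix c d assume cd: "c \<in> E" "d \<in> E" "ev c = ev d"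
    have "c *\<^sub>R ev c = S *v ev c" using ev[OF cd(1)] by simp
    also have "\<dots> = S *v ev d" using cd(3) by simp
    also have "\<dots> = d *\<^sub>R ev d" using ev[OF cd(2)] by simp
    finally have "c *\<^sub>R ev c = d *\<^sub>R ev c" using cd(3) by simp
    thus "c = d" using ev[OF cd(1)] by simp
  qed
  have "pairwise orthogonal (ev ` E)"
  proof (clarsimp simp: pairwise_def orthogonal_def)
    fix c d assume cd: "c \<in> E" "d \<in> E" "ev c \<noteq> ev d"
    hence "c \<noteq> d" by auto
    have "c * (ev c \<bullet> ev d) = (S *v ev c) \<bullet> ev d" using ev[OF cd(1)] by simp
    also have "\<dots> = ev c \<bullet> (S *v ev d)" using symq[of "ev c" "ev d"] by simp
    also have "\<dots> = d * (ev c \<bullet> ev d)" using ev[OF cd(2)] by simp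
    finally show "ev c \<bullet> ev d = 0" using \<open>c \<noteq> d\<close> by simp
  qed
  moreover have "0 \<notin> ev ` E" using ev by auto
  ultimately have "independent (ev ` E)" by (rule pairwise_orthogonal_independent)
  hence "finite (ev ` E)" using independent_bound by blast
  thus ?thesis using finite_imageD[OF _ inj] E_def by simp
qed


lemma sigma_props:
  fixes M :: "real^'n^'n"
  shows "sigma_min M \<ge> 0" "norm (M *v x) \<ge> sigma_min M * norm x"
    "x \<bullet> ((transpose M ** M) *v x) \<ge> (sigma_min M)^2 * (x \<bullet> x)"
proof -
  define S where "S = transpose M ** M"
  have sym: "transpose S = S" unfolding S_def by (simp add: matrix_transpose_mul)
  have qS: "x \<bullet> (S *v x) = (M *v x) \<bullet> (M *v x)" for x
    unfolding S_def matrix_vector_mul_assoc[symmetric] by (rule inner_transpose)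
  obtain l where l: "l \<in> real_eigenvalues S" "\<And>x. l * (x \<bullet> x) \<le> x \<bullet> (S *v x)"
    using rayleigh_min[OF sym] by blast
  have minl: "Min (real_eigenvalues S) = l"
  proof (rule Min_eqI[OF eig_finite[OF sym] _ l(1)])
    fix y assume "y \<in> real_eigenvalues S"
    then obtain v where v: "v \<noteq> 0" "S *v v = y *\<^sub>R v" unfolding real_eigenvalues_def by auto
    have "l * (v \<bullet> v) \<le> y * (v \<bullet> v)" using l(2)[of v] v(2) by simp
    moreover have "v \<bullet> v > 0" using v(1) by simp
    ultimately show "l \<le> y" by simp
  qed
  obtain v where v: "v \<noteq> 0" "S *v v = l *\<^sub>R v" using l(1) unfolding real_eigenvalues_def by auto
  have "l * (v \<bullet> v) \<ge> 0" using qS[of v] v(2) by simp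
  moreover have "v \<bullet> v > 0" using v(1) by simp
  ultimately have l0: "l \<ge> 0" by (simp add: zero_le_mult_iff)
  have sig: "sigma_min M = sqrt l" unfolding sigma_min_def S_def[symmetric] minl ..
  show "sigma_min M \<ge> 0" using sig l0 by simp
  have sq: "(sigma_min M)^2 = l" using sig l0 by simp
  show "x \<bullet> ((transpose M ** M) *v x) \<ge> (sigma_min M)^2 * (x \<bullet> x)"
    using l(2)[of x] sq S_def by simp
  have "(sigma_min M * norm x)^2 \<le> (norm (M *v x))^2"
    using l(2)[of x] sq qS[of x] by (simp add: power_mult_distrib power2_norm_eq_inner)
  thus "norm (M *v x) \<ge> sigma_min M * norm x"
    by (rule power2_le_imp_le) simp
qed

lemma sigma_transpose:
  fixes N :: "real^'n^'n" assumes pos: "sigma_min N > 0"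
  shows "invertible N" "norm (transpose N *v y) \<ge> sigma_min N * norm y"
proof -
  let ?s = "sigma_min N"
  have "inj ((*v) N)"
  proof (rule injI)
    fix x y assume "N *v x = N *v y"
    hence "N *v (x - y) = 0" by (simp add: matrix_vector_mult_diff_distrib)
    hence "?s * norm (x - y) \<le> 0" using sigma_props(2)[of N "x - y"] by simp
    hence "norm (x - y) = 0" using pos by (simp add: mult_le_0_iff)
    thus "x = y" by simp
  qed
  then obtain B where "B ** N = mat 1" using matrix_left_invertible_injective by blast
  moreover hence "N ** B = mat 1" using matrix_left_right_inverse by blast
  ultimately show inv: "invertible N" unfolding invertible_def by blast
  define x where "x = matrix_inv N *v y"
  have y: "y = N *v x" unfolding x_def matrix_vector_mul_assoc minv[OF inv] by simp
  define S where "S = transpose N ** N"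
  define l where "l = ?s^2"
  define sv where "sv = S *v x"
  define t where "t = sv - l *\<^sub>R x"
  have xt: "x \<bullet> t \<ge> 0" using sigma_props(3)[of N x]
    unfolding t_def sv_def S_def l_def by (simp add: inner_diff_right)
  have sv: "sv = transpose N *v y" unfolding sv_def S_def y matrix_vector_mul_assoc ..
  have xs: "x \<bullet> sv = y \<bullet> y" unfolding sv inner_transpose y ..
  have svt: "sv = t + l *\<^sub>R x" unfolding t_def by simp
  have "sv \<bullet> sv - l * (x \<bullet> sv) = t \<bullet> t + l * (x \<bullet> t)"
    unfolding svt by (simp add: inner_add_left inner_add_right inner_commute[of t x] algebra_simps)
  moreover have "l \<ge> 0" unfolding l_def by simp
  ultimately have "sv \<bullet> sv \<ge> l * (y \<bullet> y)" using xt xs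
    by (metis add_nonneg_nonneg diff_ge_0_iff_ge inner_ge_zero mult_nonneg_nonneg)
  hence "(?s * norm y)^2 \<le> (norm sv)^2"
    unfolding l_def by (simp add: power_mult_distrib power2_norm_eq_inner)
  hence "?s * norm y \<le> norm sv" by (rule power2_le_imp_le) simp
  thus "norm (transpose N *v y) \<ge> ?s * norm y" using sv by simp
qed


lemma sandwich_cancel:
  fixes P Q Y :: "real^'n^'n"
  assumes "invertible P" "invertible Q"
  shows "matrix_inv P ** (P ** Y ** Q) ** matrix_inv Q = Y"
proof -
  have "matrix_inv P ** (P ** Y ** Q) ** matrix_inv Q = (matrix_inv P ** P) ** Y ** (Q ** matrix_inv Q)"
    by (simp add: matrix_mul_assoc)
  thus ?thesis using minv[OF assms(1)] minv[OF assms(2)] by simp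
qed

lemma sandwich_iff:
  fixes P Q U V :: "real^'n^'n"
  assumes "invertible P" "invertible Q"
  shows "(P ** U ** Q = P ** V ** Q) \<longleftrightarrow> U = V"
  using sandwich_cancel[OF assms, of U] sandwich_cancel[OF assms, of V] by metis

lemma inv_invertible:
  fixes P :: "real^'n^'n" assumes "invertible P"
  shows "invertible (matrix_inv P)" "matrix_inv (matrix_inv P) = P"
proof -
  show i: "invertible (matrix_inv P)" unfolding invertible_def using minv[OF assms] by blast
  have "matrix_inv (matrix_inv P) = matrix_inv (matrix_inv P) ** (matrix_inv P ** P)"
    using minv[OF assms] by simp
  also have "\<dots> = P" using minv[OF i] by (simp add: matrix_mul_assoc)
  finally show "matrix_inv (matrix_inv P) = P" .
qed

theorem theorem4p8:
  fixes A B K L F :: "real^'n^'n"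
  assumes "invertible B" and "invertible L"
    and "sigma_min (K ** matrix_inv L) * sigma_min (matrix_inv B ** A) > 1"
  shows "\<exists>!X :: real^'n^'n. A ** X ** K + B ** mat_abs X ** L = F"
proof -
  define M where "M = matrix_inv B ** A"
  define N where "N = K ** matrix_inv L"
  define G where "G = matrix_inv B ** F ** matrix_inv L"
  define s1 where "s1 = sigma_min M"
  define s2 where "s2 = sigma_min N"
  have s1: "s1 \<ge> 0" "\<And>x. norm (M *v x) \<ge> s1 * norm x" unfolding s1_def by (rule sigma_props)+
  have s20: "s2 \<ge> 0" unfolding s2_def by (rule sigma_props)
  have prod: "s1 * s2 > 1" using assms(3) unfolding s1_def s2_def M_def N_def by (simp add: mult.commute)
  have p1: "s1 > 0" using s1(1) prod by (cases "s1 = 0") auto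
  have p2: "s2 > 0" using s20 prod by (cases "s2 = 0") auto
  have invN: "invertible N" and s2: "\<And>y. norm (transpose N *v y) \<ge> s2 * norm y"
    using sigma_transpose[of N] p2 unfolding s2_def by auto
  have invM: "invertible M" using sigma_transpose[of M] p1 unfolding s1_def by auto
  have key: "norm (M ** Z ** N) \<ge> s1 * s2 * norm Z" for Z
  proof -
    have "s1 * (s2 * norm Z) \<le> s1 * norm (Z ** N)"
      using rows_bound[OF s20 s2, of Z] s1(1) by (rule mult_left_mono)
    also have "\<dots> \<le> norm (M ** (Z ** N))" by (rule cols_bound[OF s1(1) s1(2)])
    finally show ?thesis by (simp add: matrix_mul_assoc mult.assoc)
  qed
  define Mi where "Mi = matrix_inv M"
  define Ni where "Ni = matrix_inv N"
  have invMi: "invertible Mi" and invNi: "invertible Ni"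
    unfolding Mi_def Ni_def using inv_invertible invM invN by auto
  define T where "T X = Mi ** (G - mat_abs X) ** Ni" for X
  have equiv: "(A ** X ** K + B ** mat_abs X ** L = F) \<longleftrightarrow> T X = X" for X
  proof -
    have "(A ** X ** K + B ** mat_abs X ** L = F) \<longleftrightarrow>
      matrix_inv B ** (A ** X ** K + B ** mat_abs X ** L) ** matrix_inv L = G"
      unfolding G_def using sandwich_iff[OF inv_invertible(1)[OF assms(1)] inv_invertible(1)[OF assms(2)]]
      by blast
    also have "matrix_inv B ** (A ** X ** K + B ** mat_abs X ** L) ** matrix_inv L
       = M ** X ** N + mat_abs X"
      unfolding matrix_add_ldistrib mat_add_rdistrib sandwich_cancel[OF assms(1,2)]
      by (simp add: M_def N_def matrix_mul_assoc)
    also have "(M ** X ** N + mat_abs X = G) \<longleftrightarrow> (M ** X ** N = G - mat_abs X)"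
      by (auto simp: algebra_simps)
    also have "\<dots> \<longleftrightarrow> Mi ** (M ** X ** N) ** Ni = Mi ** (G - mat_abs X) ** Ni"
      using sandwich_iff[OF invMi invNi] by blast
    also have "Mi ** (M ** X ** N) ** Ni = X"
      unfolding Mi_def Ni_def by (rule sandwich_cancel[OF invM invN])
    finally show ?thesis unfolding T_def by auto
  qed
  have contr: "dist (T X) (T Y) \<le> (1 / (s1 * s2)) * dist X Y" for X Y
  proof -
    define W where "W = mat_abs Y - mat_abs X"
    define Z where "Z = Mi ** W ** Ni"
    have TZ: "T X - T Y = Z"
      unfolding T_def Z_def W_def mat_diff_ldistrib mat_diff_rdistrib by simp
    have MZ: "M ** Z ** N = W" unfolding Z_def Mi_def Ni_def
      using sandwich_cancel[OF invMi invNi, of W] inv_invertible(2)[OF invM] inv_invertible(2)[OF invN]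
      unfolding Mi_def Ni_def by simp
    have "s1 * s2 * norm Z \<le> norm W" using key[of Z] MZ by simp
    also have "norm W \<le> norm (X - Y)" unfolding W_def
      using abs_lip[of X Y] by (simp add: norm_minus_commute)
    finally have "s1 * s2 * norm Z \<le> norm (X - Y)" .
    hence "norm Z \<le> norm (X - Y) / (s1 * s2)" using p1 p2 by (simp add: field_simps)
    thus ?thesis using TZ by (simp add: dist_norm)
  qed
  have "\<exists>!X. T X = X"
    by (rule banach_fix_type[of "1 / (s1 * s2)"]) (use p1 p2 prod contr in auto)
  thus ?thesis using equiv by simp
qed

end
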